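(* For every integer $n\geq 3$ and every nonzero cardinal number $\beta\leq 2^{\aleph_0}$, there is a partition of $\mathbb{R}^n$ into exactly $\beta$ pairwise disjoint nonempty subsets, each of which is arcwise connected and dense in $\mathbb{R}^n$.
   Context: $\mathbb{R}^n$ carries its usual Euclidean topology. *)

theory Defs
  imports "HOL-Analysis.Analysis" "HOL-Library.Equipollence"
begin

definition arcwise_connected :: "'a::topological_space set \<Rightarrow> bool" where
  "arcwise_connected S \<longleftrightarrow>
     (\<forall>x\<in>S. \<forall>y\<in>S. x \<noteq> y \<longrightarrow>
        (\<exists>g. arc g \<and> path_image g \<subseteq> S \<and> pathstart g = x \<and> pathfinish g = y))"

end

theory Submission
  imports Defs
begin
lemma exists_irrat: "\<exists>a::real. a \<notin> \<rat>"
proof -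
  have "\<rat> \<noteq> (UNIV::real set)" using uncountable_UNIV_real countable_rat by metis
  then show ?thesis by blast
qed

lemma exists_d: "\<exists>d::real\<Rightarrow>real. d 0 = 0 \<and> (\<forall>x e w. e > 0 \<longrightarrow> (\<exists>x'. \<bar>x' - x\<bar> < e \<and> \<bar>d x' - w\<bar> < e))"
proof -
  obtain a :: real where a: "a \<notin> \<rat>" using exists_irrat by blast
  define F :: "rat \<times> nat \<Rightarrow> real" where "F = (\<lambda>(u,m). of_rat u + a / real (Suc m))"
  have injF: "inj F"
  proof (rule injI)
    fix p q assume eq: "F p = F q"
    obtain u m where p: "p = (u,m)" by fastforce
    obtain u' m' where q: "q = (u',m')" by fastforce
    have e: "of_rat u + a / real (Suc m) = of_rat u' + a / real (Suc m')" using eq p q F_def by simp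
    show "p = q"
    proof (cases "m = m'")
      case True then show ?thesis using e p q by simp
    next
      case False
      have ne: "1 / real (Suc m) - 1 / real (Suc m') \<noteq> 0" using False by simp
      have "a * (1 / real (Suc m) - 1 / real (Suc m')) = of_rat u' - of_rat u" using e by (simp add: right_diff_distrib)
      then have "a * (1 / real (Suc m) - 1 / real (Suc m')) = of_rat (u' - u)" by (simp add: of_rat_diff)
      then have "a = of_rat (u' - u) / (1 / real (Suc m) - 1 / real (Suc m'))" using ne by (simp add: field_simps)
      also have "\<dots> \<in> \<rat>" by (intro Rats_divide Rats_diff Rats_of_nat) (auto simp: Rats_of_rat)
      finally show ?thesis using a by simp
    qed
  qed
  have F0: "0 \<notin> range F"
  proof
    assume "0 \<in> range F"
    then obtain u m where "of_rat u + a / real (Suc m) = 0" by (auto simp: F_def)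
    then have "a = - of_rat u * real (Suc m)" by (simp add: field_simps)
    also have "\<dots> \<in> \<rat>" by (simp add: Rats_of_rat)
    finally show False using a by simp
  qed
  define d :: "real \<Rightarrow> real" where "d x = (if x \<in> range F then of_rat (from_nat (fst (prod_decode (snd (inv F x))))) else 0)" for x
  have d0: "d 0 = 0" using F0 by (simp add: d_def)
  have dF: "d (F (u, prod_encode (j,k))) = of_rat (from_nat j)" for u j k
    using injF by (simp add: d_def)
  have "\<exists>x'. \<bar>x' - x\<bar> < e \<and> \<bar>d x' - w\<bar> < e" if e: "e > 0" for x e w
  proof -
    obtain v where v: "v \<in> \<rat>" "w < v" "v < w + e" using Rats_dense_in_real[of w "w+e"] e by auto
    obtain vr where vr: "v = of_rat vr" using v(1) Rats_cases by blast
    obtain k :: nat where k: "\<bar>a\<bar> / e * 2 < real k" using reals_Archimedean2 by blast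
    define m where "m = prod_encode (to_nat vr, k)"
    have km: "k \<le> m" using le_prod_encode_2 m_def by simp
    obtain ur where ur: "x < of_rat ur" "of_rat ur < x + e/2"
      using Rats_dense_in_real[of x "x+e/2"] e Rats_cases by (metis less_add_same_cancel1 half_gt_zero)
    have "\<bar>a\<bar> / e * 2 < real (Suc m)" using k km by linarith
    then have "\<bar>a\<bar> < e / 2 * real (Suc m)" using e by (simp add: field_simps)
    then have small: "\<bar>a / real (Suc m)\<bar> < e/2" by (simp add: field_simps abs_divide)
    have "F (ur, m) = of_rat ur + a / real (Suc m)" by (simp add: F_def)
    then have "\<bar>F (ur, m) - x\<bar> < e" using small ur by (simp only: abs_less_iff) linarith
    moreover have "d (F (ur, m)) = v" using dF[of ur "to_nat vr" k] vr m_def by simp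
    ultimately show ?thesis using v by (intro exI[of _ "F (ur,m)"]) auto
  qed
  then show ?thesis using d0 by blast
qed

lemma path_component_subset_pc:
  "T \<subseteq> S \<Longrightarrow> path_connected T \<Longrightarrow> a \<in> T \<Longrightarrow> b \<in> T \<Longrightarrow> path_component S a b"
  by (meson path_component_of_subset path_connected_component)

lemma segment_pc: fixes a :: "'a::real_normed_vector" shows "closed_segment a b \<subseteq> S \<Longrightarrow> path_component S a b"
  by (rule path_component_subset_pc[of "closed_segment a b"]) (auto intro: convex_imp_path_connected convex_closed_segment)

lemma in_segment_cart:
  fixes a b r :: "real^'n"
  assumes "r \<in> closed_segment a b"
  shows "\<exists>u. 0 \<le> u \<and> u \<le> 1 \<and> (\<forall>i. r$i = (1-u)*a$i + u*b$i)"
  using assms by (auto simp: closed_segment_def)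

locale geo =
  fixes d :: "real \<Rightarrow> real" and i1 i2 i3 :: "'n::finite"
  assumes d0: "d 0 = 0"
    and dd: "\<And>x e w. e > 0 \<Longrightarrow> \<exists>x'. \<bar>x' - x\<bar> < e \<and> \<bar>d x' - w\<bar> < e"
    and ne12: "i1 \<noteq> i2" and ne13: "i1 \<noteq> i3" and ne23: "i2 \<noteq> i3"
begin

definition hh :: "real \<Rightarrow> real \<Rightarrow> real" where
  "hh x y = (if y \<le> 0 then y * d x else (y - 1) * d x)"

definition phi :: "real^'n \<Rightarrow> real" where
  "phi p = p$i3 - hh (p$i1) (p$i2)"

definition mk :: "real^'n \<Rightarrow> real \<Rightarrow> real \<Rightarrow> real \<Rightarrow> real^'n" where
  "mk p x y z = (\<chi> j. if j = i1 then x else if j = i2 then y else if j = i3 then z else p$j)"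

definition P :: "real \<Rightarrow> (real^'n) set" where "P t = {p. phi p = t}"

lemma mk_comp [simp]: "mk p x y z $ i1 = x" "mk p x y z $ i2 = y" "mk p x y z $ i3 = z"
  using ne12 ne13 ne23 by (auto simp: mk_def)

lemma mk_other: "j \<noteq> i1 \<Longrightarrow> j \<noteq> i2 \<Longrightarrow> j \<noteq> i3 \<Longrightarrow> mk p x y z $ j = p $ j"
  by (simp add: mk_def)

lemma hh0 [simp]: "hh x 0 = 0" "hh x 1 = 0" "hh 0 y = 0"
  by (auto simp: hh_def d0)

definition b :: "real \<Rightarrow> real^'n" where "b t = mk 0 0 0 t"

lemma phi_mk [simp]: "phi (mk p x y z) = z - hh x y" by (simp add: phi_def)

lemma E_convex: "convex {q::real^'n. q$i2 = c \<and> q$i3 = t}"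
  unfolding convex_def by (auto simp: algebra_simps) (metis distrib_right mult_1)+

lemma E0_sub: "{q::real^'n. q$i2 = 0 \<and> q$i3 = t} \<subseteq> P t"
  by (auto simp: P_def phi_def)

lemma E1_sub: "{q::real^'n. q$i2 = 1 \<and> q$i3 = t} \<subseteq> P t"
  by (auto simp: P_def phi_def)

lemma pc_E: "q$i2 = c \<Longrightarrow> q$i3 = t \<Longrightarrow> q'$i2 = c \<Longrightarrow> q'$i3 = t \<Longrightarrow>
   {q::real^'n. q$i2 = c \<and> q$i3 = t} \<subseteq> S \<Longrightarrow> path_component S q q'"
  by (rule path_component_subset_pc[OF _ convex_imp_path_connected[OF E_convex]]) auto

lemma b_in: "b t \<in> P t" by (simp add: b_def P_def)

lemma pc_base: assumes "p \<in> P t" shows "path_component (P t) p (b t)"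
proof (cases "p$i2 \<le> 0")
  case True
  let ?p1 = "mk p (p$i1) 0 t"
  have "closed_segment p ?p1 \<subseteq> P t"
  proof
    fix r assume "r \<in> closed_segment p ?p1"
    then obtain u where u: "0 \<le> u" "u \<le> 1" "\<And>i. r$i = (1-u)*p$i + u*?p1$i"
      using in_segment_cart by blast
    have r1: "r$i1 = p$i1" using u(3)[of i1] by (simp add: algebra_simps)
    have r2: "r$i2 = (1-u)*p$i2" using u(3)[of i2] by simp
    have r3: "r$i3 = (1-u)*p$i3 + u*t" using u(3)[of i3] by simp
    have "r$i2 \<le> 0" using r2 True u by (simp add: mult_nonneg_nonpos)
    moreover have eqz: "p$i3 = p$i2 * d (p$i1) + t" using assms True by (simp add: P_def phi_def hh_def)
    have "r$i3 = r$i2 * d (r$i1) + t" unfolding r1 r2 r3 eqz by (simp add: algebra_simps)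
    ultimately show "r \<in> P t" by (simp add: P_def phi_def hh_def)
  qed
  then have "path_component (P t) p ?p1" by (rule segment_pc)
  moreover have "path_component (P t) ?p1 (b t)"
    by (rule pc_E[of _ 0 t]) (auto simp: b_def intro: E0_sub[THEN subsetD])
  ultimately show ?thesis by (rule path_component_trans)
next
  case False
  let ?p1 = "mk p (p$i1) 1 t"
  have "closed_segment p ?p1 \<subseteq> P t"
  proof
    fix r assume "r \<in> closed_segment p ?p1"
    then obtain u where u: "0 \<le> u" "u \<le> 1" "\<And>i. r$i = (1-u)*p$i + u*?p1$i"
      using in_segment_cart by blast
    have r1: "r$i1 = p$i1" using u(3)[of i1] by (simp add: algebra_simps)
    have r2: "r$i2 = (1-u)*p$i2 + u" using u(3)[of i2] by simp
    have r3: "r$i3 = (1-u)*p$i3 + u*t" using u(3)[of i3] by simp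
    have "r$i2 > 0"
    proof (cases "u = 0")
      case True then show ?thesis using r2 False by simp
    next
      case False
      then show ?thesis using r2 \<open>\<not> p$i2 \<le> 0\<close> u by (smt (verit) mult_nonneg_nonneg)
    qed
    moreover have eqz: "p$i3 = (p$i2 - 1) * d (p$i1) + t" using assms False by (simp add: P_def phi_def hh_def)
    have "r$i3 = (r$i2 - 1) * d (r$i1) + t" unfolding r1 r2 r3 eqz by (simp add: algebra_simps)
    ultimately show "r \<in> P t" by (simp add: P_def phi_def hh_def)
  qed
  then have "path_component (P t) p ?p1" by (rule segment_pc)
  moreover have "path_component (P t) ?p1 (mk 0 0 1 t)"
    by (rule pc_E[of _ 1 t]) (auto intro: E1_sub[THEN subsetD])
  moreover have "path_component (P t) (mk 0 0 1 t) (b t)"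
  proof (rule segment_pc, rule subsetI)
    fix r assume "r \<in> closed_segment (mk 0 0 1 t) (b t)"
    then obtain u where u: "0 \<le> u" "u \<le> 1" "\<And>i. r$i = (1-u)*(mk 0 0 1 t)$i + u*(b t)$i"
      using in_segment_cart by blast
    have r1: "r$i1 = 0" using u(3)[of i1] by (simp add: b_def)
    have r3: "r$i3 = t" using u(3)[of i3] by (simp add: b_def algebra_simps)
    show "r \<in> P t" using r1 r3 by (simp add: P_def phi_def)
  qed
  ultimately show ?thesis by (meson path_component_trans)
qed

lemma P_pc: "path_connected (P t)"
  unfolding path_connected_component
  by (meson pc_base path_component_sym path_component_trans)

lemma dist_mk: "dist (mk p x y z) p \<le> \<bar>x - p$i1\<bar> + \<bar>y - p$i2\<bar> + \<bar>z - p$i3\<bar>"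
proof -
  have "mk p x y z - p = (x - p$i1) *\<^sub>R axis i1 1 + (y - p$i2) *\<^sub>R axis i2 1 + (z - p$i3) *\<^sub>R axis i3 1"
    by (auto simp: vec_eq_iff mk_def axis_def ne12 ne13 ne23)
  then have "dist (mk p x y z) p = norm ((x - p$i1) *\<^sub>R axis i1 (1::real) + (y - p$i2) *\<^sub>R axis i2 1 + (z - p$i3) *\<^sub>R axis i3 1)"
    by (simp add: dist_norm)
  also have "\<dots> \<le> \<bar>x - p$i1\<bar> + \<bar>y - p$i2\<bar> + \<bar>z - p$i3\<bar>"
    by (rule order_trans[OF norm_triangle_ineq]) (auto intro!: add_mono order_trans[OF norm_triangle_ineq])
  finally show ?thesis .
qed

lemma P_dense: "closure (P t) = UNIV"
proof -
  have "\<exists>q\<in>P t. dist q p < e" if e: "e > 0" for p e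
  proof -
    define \<delta> where "\<delta> = min (e/3) (1/2)"
    have dp: "\<delta> > 0" "\<delta> \<le> e/3" "\<delta> < 1" using e by (auto simp: \<delta>_def)
    define y where "y = (if p$i2 = 0 \<or> p$i2 = 1 then p$i2 + \<delta>/2 else p$i2)"
    have y: "\<bar>y - p$i2\<bar> < \<delta>" "y \<noteq> 0" "y \<noteq> 1" using dp by (auto simp: y_def)
    define c where "c = (if y \<le> 0 then y else y - 1)"
    have c: "c \<noteq> 0" using y by (auto simp: c_def)
    have hc: "hh x y = c * d x" for x by (simp add: hh_def c_def)
    have cp: "\<delta> / \<bar>c\<bar> > 0" using c dp by simp
    obtain x' where x': "\<bar>x' - p$i1\<bar> < min \<delta> (\<delta>/\<bar>c\<bar>)" "\<bar>d x' - (p$i3 - t)/c\<bar> < min \<delta> (\<delta>/\<bar>c\<bar>)"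
      using dd[of "min \<delta> (\<delta>/\<bar>c\<bar>)"] cp dp by auto
    have "\<bar>c\<bar> * \<bar>d x' - (p$i3 - t)/c\<bar> < \<bar>c\<bar> * (\<delta>/\<bar>c\<bar>)"
      using x'(2) c by (intro mult_strict_left_mono) auto
    moreover have "c * (d x' - (p$i3 - t)/c) = c * d x' - c * ((p$i3 - t)/c)" by (rule right_diff_distrib)
    moreover have "c*((p$i3-t)/c) = p$i3 - t" using c by simp
    ultimately have "\<bar>c * d x' - (p$i3 - t)\<bar> < \<delta>" using c by (simp add: abs_mult[symmetric])
    then have z: "\<bar>(c * d x' + t) - p$i3\<bar> < \<delta>" by simp
    let ?q = "mk p x' y (c * d x' + t)"
    have "?q \<in> P t" by (simp add: P_def hc)
    moreover have "dist ?q p < e"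
      using dist_mk[of p x' y "c * d x' + t"] x'(1) y(1) z dp by linarith
    ultimately show ?thesis by blast
  qed
  then show ?thesis by (auto simp: closure_approachable)
qed

definition M :: "real set \<Rightarrow> (real^'n) set" where "M A = {p. phi p \<in> A}"

lemma P_sub_M: "t \<in> A \<Longrightarrow> P t \<subseteq> M A" by (auto simp: P_def M_def)

lemma M_pc: assumes A: "{0..} \<subseteq> A" shows "path_connected (M A)"
proof -
  have bb: "path_component (M A) (b t) (b 0)" if "t \<ge> 0" for t
  proof (rule segment_pc, rule subsetI)
    fix r assume "r \<in> closed_segment (b t) (b 0)"
    then obtain u where u: "0 \<le> u" "u \<le> 1" "\<And>i. r$i = (1-u)*(b t)$i + u*(b 0)$i"
      using in_segment_cart by blast
    have r1: "r$i1 = 0" using u(3)[of i1] by (simp add: b_def)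
    have r3: "r$i3 = (1-u)*t" using u(3)[of i3] by (simp add: b_def)
    have "(1-u)*t \<ge> 0" using u that by simp
    then show "r \<in> M A" using r1 r3 A by (auto simp: M_def phi_def)
  qed
  have main: "path_component (M A) p (b 0)" if p: "p \<in> M A" for p
  proof -
    define t where "t = phi p"
    have tA: "t \<in> A" "p \<in> P t" using p by (auto simp: t_def M_def P_def)
    have pb: "path_component (M A) p (b t)"
      using pc_base[OF tA(2)] P_sub_M[OF tA(1)] path_component_of_subset by blast
    show ?thesis
    proof (cases "t \<ge> 0")
      case True then show ?thesis using pb bb path_component_trans by blast
    next
      case False
      obtain x0 where x0: "\<bar>d x0 - (1 - t)\<bar> < 1" using dd[of 1] by auto
      define s where "s = t + d x0"
      have s0: "s \<ge> 0" using x0 by (simp add: s_def)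
      have "path_component (M A) (b t) (mk 0 x0 0 t)"
        using E0_sub[of t] P_sub_M[OF tA(1)] by (intro pc_E[of _ 0 t]) (auto simp: b_def)
      moreover have "path_component (M A) (mk 0 x0 0 t) (mk 0 x0 1 s)"
      proof (rule segment_pc, rule subsetI)
        fix r assume "r \<in> closed_segment (mk 0 x0 0 t) (mk 0 x0 1 s)"
        then obtain u where u: "0 \<le> u" "u \<le> 1" "\<And>i. r$i = (1-u)*(mk 0 x0 0 t)$i + u*(mk 0 x0 1 s)$i"
          using in_segment_cart by blast
        have r1: "r$i1 = x0" using u(3)[of i1] by (simp add: algebra_simps)
        have r2: "r$i2 = u" using u(3)[of i2] by simp
        have r3: "r$i3 = (1-u)*t + u * s" using u(3)[of i3] by simp
        show "r \<in> M A"
        proof (cases "u = 0")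
          case True then show ?thesis using r1 r2 r3 tA by (simp add: M_def phi_def)
        next
          case False
          then have "phi r = s" unfolding phi_def hh_def r1 r2 r3 s_def using u
            by (simp add: algebra_simps)
          then show ?thesis using s0 A by (auto simp: M_def)
        qed
      qed
      moreover have "path_component (M A) (mk 0 x0 1 s) (b s)"
      proof -
        have "mk 0 x0 1 s \<in> P s" by (simp add: P_def)
        then show ?thesis using pc_base P_sub_M[of s A] s0 A path_component_of_subset by blast
      qed
      ultimately show ?thesis using bb[OF s0] pb by (meson path_component_trans)
    qed
  qed
  show ?thesis unfolding path_connected_component
    by (meson main path_component_sym path_component_trans)
qed

end

theorem corollary2:
  fixes B :: "'b set"
  assumes "CARD('n::finite) \<ge> 3"
    and "B \<noteq> {}"
    and "B \<lesssim> (UNIV :: real set)"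
  shows "\<exists>\<P> :: (real ^ 'n) set set.
           \<P> \<approx> B \<and> \<Union>\<P> = UNIV \<and> pairwise disjnt \<P> \<and>
           (\<forall>S\<in>\<P>. S \<noteq> {} \<and> arcwise_connected S \<and> closure S = UNIV)"
proof -
  have "Suc (Suc (Suc 0)) \<le> card (UNIV::'n set)" using assms(1) by simp
  then obtain i1 i2 i3 :: 'n where ne: "i1 \<noteq> i2" "i1 \<noteq> i3" "i2 \<noteq> i3"
    unfolding card_le_Suc_iff by (metis insert_iff)
  obtain d :: "real \<Rightarrow> real" where d: "d 0 = 0" "\<And>x e w. e > 0 \<Longrightarrow> \<exists>x'. \<bar>x' - x\<bar> < e \<and> \<bar>d x' - w\<bar> < e"
    using exists_d by blast
  interpret geo d i1 i2 i3 using d ne by unfold_locales auto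
  obtain f :: "'b \<Rightarrow> real" where f: "inj_on f B" using assms(3) by (auto simp: lepoll_def)
  define g where "g b = - exp (f b)" for b
  have ginj: "inj_on g B" using f by (auto simp: inj_on_def g_def)
  have gneg: "g b < 0" for b by (simp add: g_def)
  obtain b0 where b0: "b0 \<in> B" using assms(2) by blast
  define A where "A b = (if b = b0 then UNIV - g ` (B - {b0}) else {g b})" for b
  define Q where "Q b = M (A b)" for b
  have disjA: "A b \<inter> A b' = {}" if "b \<in> B" "b' \<in> B" "b \<noteq> b'" for b b'
    using that ginj by (auto simp: A_def inj_on_def)
  have tA: "\<exists>t. t \<in> A b" for b
  proof (cases "b = b0")
    case True
    have "(0::real) \<notin> g ` (B - {b0})" using gneg by (metis imageE less_irrefl)
    then show ?thesis using True by (auto simp: A_def)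
  qed (auto simp: A_def)
  have Qne: "Q b \<noteq> {}" for b
  proof -
    obtain t where "t \<in> A b" using tA by blast
    then show ?thesis using b_in[of t] P_sub_M[of t "A b"] by (auto simp: Q_def)
  qed
  have disjQ: "Q b \<inter> Q b' = {}" if "b \<in> B" "b' \<in> B" "b \<noteq> b'" for b b'
    using disjA[OF that] by (auto simp: Q_def M_def)
  have injQ: "inj_on Q B"
    by (rule inj_onI) (metis disjQ Qne Int_absorb)
  have cover: "\<Union>(Q ` B) = UNIV"
  proof -
    have "p \<in> \<Union>(Q ` B)" for p
    proof (cases "phi p \<in> g ` (B - {b0})")
      case True
      then obtain b where "b \<in> B" "b \<noteq> b0" "phi p = g b" by auto
      then show ?thesis by (auto simp: Q_def M_def A_def)
    next
      case False
      then show ?thesis using b0 by (auto simp: Q_def M_def A_def)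
    qed
    then show ?thesis by auto
  qed
  have props: "Q b \<noteq> {} \<and> arcwise_connected (Q b) \<and> closure (Q b) = UNIV" if "b \<in> B" for b
  proof -
    have pc: "path_connected (Q b)"
    proof (cases "b = b0")
      case True
      have "{0..} \<subseteq> A b" using True gneg by (auto simp: A_def) (metis not_less)
      then show ?thesis unfolding Q_def by (rule M_pc)
    next
      case False
      then have "Q b = P (g b)" by (auto simp: Q_def A_def M_def P_def)
      then show ?thesis using P_pc by simp
    qed
    obtain t where t: "t \<in> A b" using tA by blast
    have "closure (P t) \<subseteq> closure (Q b)" using P_sub_M[OF t] by (intro closure_mono) (simp add: Q_def)
    then have "closure (Q b) = UNIV" using P_dense by auto
    then show ?thesis using pc Qne by (simp add: arcwise_connected_def path_connected_arcwise)
  qed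
  show ?thesis
  proof (intro exI[of _ "Q ` B"] conjI ballI)
    show "Q ` B \<approx> B" using injQ by (rule inj_on_image_eqpoll_self)
    show "\<Union>(Q ` B) = UNIV" by (rule cover)
    show "pairwise disjnt (Q ` B)"
      unfolding pairwise_def disjnt_def using disjQ by blast
  qed (use props in auto)
qed

end
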